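(* Let $d\ge1$, let $\{1,\dots,d\}$ be partitioned into $\mathcal{D}$ and $\mathcal{U}$ with $|\mathcal{D}|=1$, let $\mathbb{C}$ be the contribution matrix of a causal graph, $c\in\mathbb{R}^d$ with $c_f>0$, $\alpha>0$, $p\in[1,3]$, and $\beta\in(0,1]$. Then the set $$\mathcal{H}=\{h_0\in\mathbb{R}^d:\ \mathbb{C}h_0\ge0\ \text{and every optimal solution of } \min_{e\ge0}\Big(\sum_f c_fe_f^{\,p}\Big)^{1/p}\ \text{s.t.}\ (\mathbb{C}h_0)^\top e\ge\alpha\ \text{is }\beta\text{-desirable}\}$$ of $\beta$-desirable classifiers is convex.
   Context: A causal graph is a weighted directed acyclic graph on $\{1,\dots,d\}$ with adjacency matrix $A$ ($A_{ij}$ the weight of edge $i\to j$, $0$ if absent); its contribution matrix is $\mathbb{C}=\sum_{k=0}^{d}A^k$. $\mathcal{D}$ is the set of desirable features, $\mathcal{U}$ the set of undesirable features. An effort profile $e$ is $\beta$-desirable if $\|e_{\mathcal{D}}\|_2\ge\beta\|e\|_2$, where $e_{\mathcal{D}}$ is the restriction of $e$ to coordinates in $\mathcal{D}$. *)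

theory Defs
  imports "HOL-Analysis.Analysis"
begin

primrec matpow :: "real^'n^'n \<Rightarrow> nat \<Rightarrow> real^'n^'n" where
  "matpow A 0 = mat 1"
| "matpow A (Suc k) = matpow A k ** A"

definition is_dag :: "real^'n^'n \<Rightarrow> bool" where
  "is_dag A \<longleftrightarrow> acyclic {(i, j). A $ i $ j \<noteq> 0}"

definition contribution_matrix :: "real^'n^'n \<Rightarrow> real^'n^'n" where
  "contribution_matrix A = (\<Sum>k\<in>{0..CARD('n)}. matpow A k)"

definition nonneg_vec :: "real^'n \<Rightarrow> bool" where
  "nonneg_vec x \<longleftrightarrow> (\<forall>i. 0 \<le> x $ i)"

definition effort_cost :: "real^'n \<Rightarrow> real \<Rightarrow> real^'n \<Rightarrow> real" where
  "effort_cost c p e = (\<Sum>f\<in>UNIV. c $ f * (e $ f) powr p) powr (1 / p)"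

definition feasible_effort :: "real^'n^'n \<Rightarrow> real \<Rightarrow> real^'n \<Rightarrow> real^'n \<Rightarrow> bool" where
  "feasible_effort C \<alpha> h0 e \<longleftrightarrow> nonneg_vec e \<and> (C *v h0) \<bullet> e \<ge> \<alpha>"

definition optimal_effort ::
  "real^'n^'n \<Rightarrow> real^'n \<Rightarrow> real \<Rightarrow> real \<Rightarrow> real^'n \<Rightarrow> real^'n \<Rightarrow> bool" where
  "optimal_effort C c p \<alpha> h0 e \<longleftrightarrow> feasible_effort C \<alpha> h0 e \<and>
     (\<forall>e'. feasible_effort C \<alpha> h0 e' \<longrightarrow> effort_cost c p e \<le> effort_cost c p e')"

definition beta_desirable :: "'n set \<Rightarrow> real \<Rightarrow> real^'n \<Rightarrow> bool" where
  "beta_desirable D \<beta> e \<longleftrightarrow> sqrt (\<Sum>i\<in>D. (e $ i)^2) \<ge> \<beta> * norm e"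

definition desirable_classifiers ::
  "real^'n^'n \<Rightarrow> 'n set \<Rightarrow> real^'n \<Rightarrow> real \<Rightarrow> real \<Rightarrow> real \<Rightarrow> (real^'n) set" where
  "desirable_classifiers C D c p \<alpha> \<beta> =
     {h0. nonneg_vec (C *v h0) \<and>
          (\<forall>e. optimal_effort C c p \<alpha> h0 e \<longrightarrow> beta_desirable D \<beta> e)}"

end

theory Submission
  imports Defs
begin


lemma tangent_strict:
  fixes p x y :: real
  assumes p: "p > 1" and x: "x \<ge> 0" and y: "y \<ge> 0" and xy: "x \<noteq> y"
  shows "y powr p + p * y powr (p - 1) * (x - y) < x powr p"
proof -
  consider "y = 0" | "x = 0" "y > 0" | "x > 0" "y > 0" using x y xy by linarith
  then show ?thesis
  proof cases
    case 1
    then show ?thesis using x xy p by simp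
  next
    case 2
    have "y powr (p - 1) * y = y powr p"
      using 2 by (metis powr_add powr_one diff_add_cancel less_imp_le)
    then show ?thesis using 2 p by (simp add: algebra_simps)
  next
    case 3
    define g where "g t = t powr p - p * y powr (p - 1) * t" for t
    have der: "(g has_real_derivative (p * t powr (p - 1) - p * y powr (p - 1))) (at t)" if "t > 0" for t
      unfolding g_def
      using DERIV_diff[OF has_real_derivative_powr[OF that, of p] DERIV_cmult_Id[of "p * y powr (p - 1)" t]]
      by simp
    have "g y < g x"
    proof (cases "y < x")
      case True
      obtain z where z: "z > y" "z < x" "g x - g y = (x - y) * (p * z powr (p - 1) - p * y powr (p - 1))"
        using MVT2[OF True, of g "\<lambda>t. p * t powr (p - 1) - p * y powr (p - 1)"] der 3 by force
      have "y powr (p - 1) < z powr (p - 1)" using z 3 p by (intro powr_less_mono2) auto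
      then have "0 < (x - y) * (p * z powr (p - 1) - p * y powr (p - 1))"
        using True p by (intro mult_pos_pos) auto
      then show ?thesis using z by simp
    next
      case False
      then have lt: "x < y" using xy by simp
      obtain z where z: "z > x" "z < y" "g y - g x = (y - x) * (p * z powr (p - 1) - p * y powr (p - 1))"
        using MVT2[OF lt, of g "\<lambda>t. p * t powr (p - 1) - p * y powr (p - 1)"] der 3 by force
      have "z powr (p - 1) < y powr (p - 1)" using z 3 p by (intro powr_less_mono2) auto
      then have "(y - x) * (p * z powr (p - 1) - p * y powr (p - 1)) < 0"
        using lt p by (intro mult_pos_neg) auto
      then show ?thesis using z by simp
    qed
    moreover have "y powr (p - 1) * y = y powr p"
      using 3 by (metis powr_add powr_one diff_add_cancel less_imp_le)
    ultimately show ?thesis unfolding g_def by (simp add: algebra_simps)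
  qed
qed

lemma tangent:
  fixes p x y :: real
  assumes p: "p > 1" and x: "x \<ge> 0" and y: "y \<ge> 0"
  shows "y powr p + p * y powr (p - 1) * (x - y) \<le> x powr p"
  using tangent_strict[OF p x y] by (cases "x = y") auto

lemma powr_convex0:
  fixes s a b u v :: real
  assumes s: "s \<ge> 1" and a: "a \<ge> 0" and b: "b \<ge> 0" and u: "u \<ge> 0" and v: "v \<ge> 0" and uv: "u + v = 1"
  shows "(u * a + v * b) powr s \<le> u * a powr s + v * b powr s"
proof -
  have aux: "(u * a) powr s \<le> u * a powr s" if "u \<ge> 0" "u \<le> 1" "a \<ge> 0" for u a :: real
  proof -
    have "u powr s \<le> u powr 1" using that s powr_mono'[of 1 s u] by simp
    then have "u powr s \<le> u" using that by simp
    then show ?thesis using that by (simp add: powr_mult mult_right_mono)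
  qed
  show ?thesis
  proof (cases "a = 0 \<or> b = 0")
    case True
    then show ?thesis using aux[of u a] aux[of v b] u v uv s a b by auto
  next
    case False
    then have "a \<in> {0<..}" "b \<in> {0<..}" using a b by auto
    moreover have uu: "u = 1 - v" using uv by simp
    ultimately show ?thesis unfolding uu using convex_onD[OF powr_convex[OF s], of v a b] u v uv
      by simp
  qed
qed



definition Fc :: "real^'n \<Rightarrow> real \<Rightarrow> real^'n \<Rightarrow> real" where
  "Fc c p e = (\<Sum>f\<in>UNIV. c $ f * (e $ f) powr p)"

definition optw :: "real^'n \<Rightarrow> real \<Rightarrow> real \<Rightarrow> real^'n \<Rightarrow> real^'n \<Rightarrow> bool" where
  "optw c p \<alpha> w e \<longleftrightarrow> nonneg_vec e \<and> w \<bullet> e \<ge> \<alpha> \<and>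
     (\<forall>e'. nonneg_vec e' \<and> w \<bullet> e' \<ge> \<alpha> \<longrightarrow> Fc c p e \<le> Fc c p e')"

definition Gset :: "real^'n \<Rightarrow> real \<Rightarrow> real \<Rightarrow> 'n \<Rightarrow> real \<Rightarrow> (real^'n) set" where
  "Gset c p \<alpha> d \<beta> = {w. nonneg_vec w \<and> (\<forall>e. optw c p \<alpha> w e \<longrightarrow> beta_desirable {d} \<beta> e)}"

lemma Fc_nonneg: assumes "\<forall>f. c $ f > 0" shows "Fc c p e \<ge> 0"
  unfolding Fc_def using assms by (intro sum_nonneg) (simp add: less_imp_le)

lemma optimal_effort_iff:
  assumes c: "\<forall>f. c $ f > 0" and p: "p > 0"
  shows "optimal_effort C c p \<alpha> h0 e \<longleftrightarrow> optw c p \<alpha> (C *v h0) e"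
proof -
  have mono: "effort_cost c p e \<le> effort_cost c p e' \<longleftrightarrow> Fc c p e \<le> Fc c p e'" for e e'
  proof -
    have a: "Fc c p e \<ge> 0" "Fc c p e' \<ge> 0" using Fc_nonneg[OF c] by auto
    have ec: "effort_cost c p x = Fc c p x powr (1 / p)" for x
      unfolding effort_cost_def Fc_def by simp
    show ?thesis
    proof
      assume "effort_cost c p e \<le> effort_cost c p e'"
      then show "Fc c p e \<le> Fc c p e'" unfolding ec
        using powr_less_mono2[of "1/p" "Fc c p e'" "Fc c p e"] a p by force
    next
      assume "Fc c p e \<le> Fc c p e'"
      then show "effort_cost c p e \<le> effort_cost c p e'" unfolding ec
        using powr_mono2[of "1/p" "Fc c p e" "Fc c p e'"] a p by simp
    qed
  qed
  show ?thesis unfolding optimal_effort_def optw_def feasible_effort_def mono by blast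
qed

lemma classifiers_eq:
  assumes c: "\<forall>f. c $ f > 0" and p: "p > 0"
  shows "desirable_classifiers C {d} c p \<alpha> \<beta> = (\<lambda>h. C *v h) -` Gset c p \<alpha> d \<beta>"
  unfolding desirable_classifiers_def Gset_def optimal_effort_iff[OF c p] by auto

lemma bd_scaled:
  fixes v :: "real^'n"
  assumes k: "k > 0" and v: "nonneg_vec v"
  shows "beta_desirable {d} \<beta> (k *\<^sub>R v) \<longleftrightarrow> \<beta> * norm v \<le> v $ d"
proof -
  have "sqrt (\<Sum>i\<in>{d}. ((k *\<^sub>R v) $ i)^2) = k * v $ d"
    using k v unfolding nonneg_vec_def by simp
  moreover have "norm (k *\<^sub>R v) = k * norm v" using k by simp
  ultimately show ?thesis unfolding beta_desirable_def using k
    by (smt (verit, best) mult.left_commute mult_le_cancel_left_pos)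
qed

lemma opt_p_gt1:
  fixes w c :: "real^'n"
  assumes p: "p > 1" and c: "\<forall>f. c $ f > 0" and \<alpha>: "\<alpha> > 0"
    and w: "nonneg_vec w" "w \<noteq> 0"
  defines "v \<equiv> \<chi> f. (w $ f / c $ f) powr (1 / (p - 1))"
  defines "k \<equiv> \<alpha> / (w \<bullet> v)"
  shows "k > 0" "optw c p \<alpha> w (k *\<^sub>R v)" "\<And>e. optw c p \<alpha> w e \<Longrightarrow> e = k *\<^sub>R v"
proof -
  have wnn: "w $ f \<ge> 0" for f using w unfolding nonneg_vec_def by auto
  have cpos: "c $ f > 0" for f using c by auto
  have vnn: "v $ f \<ge> 0" for f unfolding v_def by simp
  obtain f0 where f0: "w $ f0 \<noteq> 0" using w(2) by (metis vec_eq_iff zero_index)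
  have "w $ f0 * v $ f0 > 0"
    using f0 wnn[of f0] cpos[of f0] unfolding v_def by simp
  then have N: "w \<bullet> v > 0" unfolding inner_vec_def inner_real_def
    by (intro sum_pos2[of UNIV f0]) (auto intro: mult_nonneg_nonneg wnn vnn)
  show kpos: "k > 0" unfolding k_def using N \<alpha> by simp
  define es where "es = k *\<^sub>R v"
  define lam where "lam = p * k powr (p - 1)"
  have lam: "lam \<ge> 0" unfolding lam_def using p by simp
  have esnn: "nonneg_vec es" unfolding es_def nonneg_vec_def using kpos vnn by simp
  have wes: "w \<bullet> es = \<alpha>" unfolding es_def k_def using N by simp
  have key: "c $ f * (p * es $ f powr (p - 1)) = lam * w $ f" for f
  proof -
    have "v $ f powr (p - 1) = w $ f / c $ f"
      unfolding v_def using p wnn[of f] cpos[of f] by (simp add: powr_powr)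
    then have "es $ f powr (p - 1) = k powr (p - 1) * (w $ f / c $ f)"
      unfolding es_def by (simp add: powr_mult)
    then show ?thesis unfolding lam_def using cpos[of f] by (simp add: field_simps)
  qed
  have pt: "c $ f * e $ f powr p \<ge> c $ f * es $ f powr p + lam * w $ f * (e $ f - es $ f)"
    if "e $ f \<ge> 0" for e f
  proof -
    have "es $ f powr p + p * es $ f powr (p - 1) * (e $ f - es $ f) \<le> e $ f powr p"
      using tangent[OF p that] esnn unfolding nonneg_vec_def by auto
    then have "c $ f * (es $ f powr p + p * es $ f powr (p - 1) * (e $ f - es $ f)) \<le> c $ f * e $ f powr p"
      using cpos[of f] by (simp add: mult_left_mono)
    moreover have "c $ f * (es $ f powr p + p * es $ f powr (p - 1) * (e $ f - es $ f))
        = c $ f * es $ f powr p + (c $ f * (p * es $ f powr (p - 1))) * (e $ f - es $ f)"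
      by (simp add: algebra_simps)
    ultimately show ?thesis unfolding key by simp
  qed
  have pts: "c $ f * e $ f powr p > c $ f * es $ f powr p + lam * w $ f * (e $ f - es $ f)"
    if "e $ f \<ge> 0" "e $ f \<noteq> es $ f" for e f
  proof -
    have "es $ f powr p + p * es $ f powr (p - 1) * (e $ f - es $ f) < e $ f powr p"
      using tangent_strict[OF p that(1) _ that(2)] esnn unfolding nonneg_vec_def by auto
    then have "c $ f * (es $ f powr p + p * es $ f powr (p - 1) * (e $ f - es $ f)) < c $ f * e $ f powr p"
      using cpos[of f] by (simp add: mult_strict_left_mono)
    moreover have "c $ f * (es $ f powr p + p * es $ f powr (p - 1) * (e $ f - es $ f))
        = c $ f * es $ f powr p + (c $ f * (p * es $ f powr (p - 1))) * (e $ f - es $ f)"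
      by (simp add: algebra_simps)
    ultimately show ?thesis unfolding key by simp
  qed
  have sumeq: "(\<Sum>f\<in>UNIV. c $ f * es $ f powr p + lam * w $ f * (e $ f - es $ f))
      = Fc c p es + lam * (w \<bullet> e - \<alpha>)" for e
    unfolding Fc_def wes[symmetric] inner_vec_def inner_real_def
    by (simp add: sum.distrib sum_distrib_left sum_subtractf algebra_simps)
  have ge: "Fc c p e \<ge> Fc c p es + lam * (w \<bullet> e - \<alpha>)" if "nonneg_vec e" for e
    unfolding sumeq[symmetric] unfolding Fc_def
    using that unfolding nonneg_vec_def by (intro sum_mono pt) auto
  have gt: "Fc c p e > Fc c p es + lam * (w \<bullet> e - \<alpha>)" if h1: "nonneg_vec e" and h2: "e \<noteq> es" for e
  proof -
    obtain f where "e $ f \<noteq> es $ f" using h2 by (metis vec_eq_iff)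
    then show ?thesis
      unfolding sumeq[symmetric] unfolding Fc_def
      using h1 unfolding nonneg_vec_def
      by (intro sum_strict_mono_ex1) (auto intro!: pt pts)
  qed
  show opt: "optw c p \<alpha> w (k *\<^sub>R v)"
    unfolding es_def[symmetric] optw_def
  proof (intro conjI allI impI)
    fix e' assume "nonneg_vec e' \<and> \<alpha> \<le> w \<bullet> e'"
    then show "Fc c p es \<le> Fc c p e'" using ge[of e'] lam
      by (smt (verit) mult_nonneg_nonneg)
  qed (use esnn wes in auto)
  fix e assume oe: "optw c p \<alpha> w e"
  show "e = k *\<^sub>R v" unfolding es_def[symmetric]
  proof (rule ccontr)
    assume ne: "e \<noteq> es"
    have "nonneg_vec e" "w \<bullet> e \<ge> \<alpha>" "Fc c p e \<le> Fc c p es"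
      using oe esnn wes unfolding optw_def by auto
    then show False using gt[of e] ne lam by (smt (verit) mult_nonneg_nonneg)
  qed
qed



lemma Gset_zero:
  assumes "\<alpha> > 0" shows "0 \<in> Gset c p \<alpha> d \<beta>"
  unfolding Gset_def optw_def nonneg_vec_def using assms by auto

lemma Gset_p_gt1:
  fixes c :: "real^'n"
  assumes p: "p > 1" and c: "\<forall>f. c $ f > 0" and \<alpha>: "\<alpha> > 0"
  shows "Gset c p \<alpha> d \<beta> = {w. nonneg_vec w \<and>
     \<beta> * norm (\<chi> f. (w $ f / c $ f) powr (1 / (p - 1))) \<le> (w $ d / c $ d) powr (1 / (p - 1))}"
  (is "_ = {w. nonneg_vec w \<and> ?P w}")
proof (intro set_eqI iffI)
  fix w assume wG: "w \<in> Gset c p \<alpha> d \<beta>"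
  then have wn: "nonneg_vec w" unfolding Gset_def by auto
  show "w \<in> {w. nonneg_vec w \<and> ?P w}"
  proof (cases "w = 0")
    case True then show ?thesis using wn by (simp add: zero_vec_def[symmetric])
  next
    case False
    define v where "v = (\<chi> f. (w $ f / c $ f) powr (1 / (p - 1)))"
    define k where "k = \<alpha> / (w \<bullet> v)"
    note o = opt_p_gt1[OF p c \<alpha> wn False, folded v_def, folded k_def]
    have "beta_desirable {d} \<beta> (k *\<^sub>R v)" using wG o(2) unfolding Gset_def by auto
    then have "\<beta> * norm v \<le> v $ d" using bd_scaled[OF o(1), of v] unfolding v_def nonneg_vec_def by simp
    then show ?thesis using wn unfolding v_def by simp
  qed
next
  fix w assume "w \<in> {w. nonneg_vec w \<and> ?P w}"
  then have wn: "nonneg_vec w" and P: "?P w" by auto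
  show "w \<in> Gset c p \<alpha> d \<beta>"
  proof (cases "w = 0")
    case True then show ?thesis using Gset_zero[OF \<alpha>] by simp
  next
    case False
    define v where "v = (\<chi> f. (w $ f / c $ f) powr (1 / (p - 1)))"
    define k where "k = \<alpha> / (w \<bullet> v)"
    note o = opt_p_gt1[OF p c \<alpha> wn False, folded v_def, folded k_def]
    have "beta_desirable {d} \<beta> (k *\<^sub>R v)"
      using bd_scaled[OF o(1), of v] P unfolding v_def nonneg_vec_def by simp
    then show ?thesis using o(3) wn unfolding Gset_def by auto
  qed
qed

lemma cond_equiv:
  fixes x :: "real^'n" and r \<beta> :: real
  assumes x: "nonneg_vec x" and b: "\<beta> > 0"
  shows "\<beta> * norm (\<chi> f. x $ f powr r) \<le> x $ d powr r \<longleftrightarrow>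
         \<beta>^2 * (\<Sum>f\<in>UNIV. x $ f powr (2 * r)) \<le> x $ d powr (2 * r)"
proof -
  have sq: "(y powr r)^2 = y powr (2 * r)" for y :: real
    by (simp add: power2_eq_square powr_add[symmetric])
  have "norm (\<chi> f. x $ f powr r) = sqrt (\<Sum>f\<in>UNIV. x $ f powr (2 * r))"
    unfolding norm_vec_def L2_set_def by (simp add: sq)
  then have "\<beta> * norm (\<chi> f. x $ f powr r) = sqrt (\<beta>^2 * (\<Sum>f\<in>UNIV. x $ f powr (2 * r)))"
    using b by (simp add: real_sqrt_mult)
  moreover have "x $ d powr r = sqrt (x $ d powr (2 * r))"
    by (metis sq real_sqrt_abs abs_of_nonneg powr_ge_zero)
  ultimately show ?thesis by simp
qed

lemma convex_T:
  fixes \<beta> s :: real and d :: "'n::finite"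
  assumes s: "s \<ge> 1" and b: "\<beta> > 0"
  shows "convex {x::real^'n. nonneg_vec x \<and> \<beta>^2 * (\<Sum>f\<in>UNIV. x $ f powr s) \<le> x $ d powr s}"
    (is "convex ?T")
proof -
  have b2: "\<beta>^2 > 0" using b by simp
  have zero: "x = 0" if "x \<in> ?T" "x $ d = 0" for x
  proof -
    have "\<beta>^2 * (\<Sum>f\<in>UNIV. x $ f powr s) \<le> 0" using that s by simp
    moreover have sn: "(\<Sum>f\<in>UNIV. x $ f powr s) \<ge> 0" by (simp add: sum_nonneg)
    ultimately have "(\<Sum>f\<in>UNIV. x $ f powr s) = 0" using b2
      by (smt (verit) mult_pos_pos)
    then have "\<forall>f\<in>UNIV. x $ f powr s = 0" by (subst (asm) sum_nonneg_eq_0_iff) auto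
    then show ?thesis by (simp add: vec_eq_iff)
  qed
  have zT: "0 \<in> ?T" unfolding nonneg_vec_def using s by simp
  have norm1: "\<beta>^2 * (\<Sum>f\<in>UNIV. (x $ f / x $ d) powr s) \<le> 1" if "x \<in> ?T" for x
  proof (cases "x $ d = 0")
    case True then show ?thesis using zero[OF that] by simp
  next
    case False
    moreover have "x $ d \<ge> 0" using that unfolding nonneg_vec_def by simp
    ultimately have t: "x $ d > 0" by simp
    have tp: "x $ d powr s > 0" using t by simp
    have "\<beta>^2 * (\<Sum>f\<in>UNIV. (x $ f / x $ d) powr s) = \<beta>^2 * (\<Sum>f\<in>UNIV. x $ f powr s) / x $ d powr s"
      by (simp add: powr_divide sum_divide_distrib[symmetric])
    also have "\<dots> \<le> 1" using that tp by simp
    finally show ?thesis .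
  qed
  show ?thesis
  proof (rule convexI)
    fix x y :: "real^'n" and u v :: real
    assume xT: "x \<in> ?T" and yT: "y \<in> ?T" and u: "0 \<le> u" and v: "0 \<le> v" and uv: "u + v = 1"
    define z where "z = u *\<^sub>R x + v *\<^sub>R y"
    have xn: "x $ f \<ge> 0" "y $ f \<ge> 0" for f using xT yT unfolding nonneg_vec_def by auto
    have zn: "nonneg_vec z" unfolding z_def nonneg_vec_def using xn u v by simp
    define t where "t = z $ d"
    have t: "t = u * x $ d + v * y $ d" unfolding t_def z_def by simp
    show "u *\<^sub>R x + v *\<^sub>R y \<in> ?T" unfolding z_def[symmetric]
    proof (cases "t = 0")
      case True
      have "u * x $ d = 0" "v * y $ d = 0" using True t u v xn[of d]
        by (smt (verit) mult_nonneg_nonneg)+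
      then consider "u = 0" | "v = 0" | "x $ d = 0" "y $ d = 0" by auto
      then show "z \<in> ?T"
      proof cases
        case 1 then have "z = y" using uv unfolding z_def by simp
        then show ?thesis using yT by simp
      next
        case 2 then have "z = x" using uv unfolding z_def by simp
        then show ?thesis using xT by simp
      next
        case 3 then have "z = 0" using zero[OF xT] zero[OF yT] unfolding z_def by simp
        then show ?thesis using zT by simp
      qed
    next
      case False
      then have tpos: "t > 0" using t u v xn[of d] by (smt (verit) mult_nonneg_nonneg)
      define l where "l = u * x $ d / t"
      define m where "m = v * y $ d / t"
      have l: "l \<ge> 0" "m \<ge> 0" "l + m = 1"
        unfolding l_def m_def using tpos u v xn[of d] t by (auto simp: add_divide_distrib[symmetric])
      have rep: "u * a $ f = u * a $ d * (a $ f / a $ d)" if "a \<in> ?T" for a f u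
      proof (cases "a $ d = 0")
        case True then show ?thesis using zero[OF that] by simp
      qed simp
      have zf: "z $ f / t = l * (x $ f / x $ d) + m * (y $ f / y $ d)" for f
      proof -
        have "z $ f = u * x $ f + v * y $ f" unfolding z_def by simp
        also have "\<dots> = u * x $ d * (x $ f / x $ d) + v * y $ d * (y $ f / y $ d)"
          using rep[OF xT, of u f] rep[OF yT, of v f] by simp
        finally show ?thesis unfolding l_def m_def using tpos by (simp add: field_simps)
      qed
      have "(\<Sum>f\<in>UNIV. (z $ f / t) powr s) \<le>
            (\<Sum>f\<in>UNIV. l * (x $ f / x $ d) powr s + m * (y $ f / y $ d) powr s)"
        unfolding zf using l xn s by (intro sum_mono powr_convex0) auto
      also have "\<dots> = l * (\<Sum>f\<in>UNIV. (x $ f / x $ d) powr s) + m * (\<Sum>f\<in>UNIV. (y $ f / y $ d) powr s)"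
        by (simp add: sum.distrib sum_distrib_left)
      finally have S: "(\<Sum>f\<in>UNIV. (z $ f / t) powr s) \<le> l * (\<Sum>f\<in>UNIV. (x $ f / x $ d) powr s) + m * (\<Sum>f\<in>UNIV. (y $ f / y $ d) powr s)" .
      have "\<beta>^2 * (\<Sum>f\<in>UNIV. (z $ f / t) powr s) \<le>
          l * (\<beta>^2 * (\<Sum>f\<in>UNIV. (x $ f / x $ d) powr s)) + m * (\<beta>^2 * (\<Sum>f\<in>UNIV. (y $ f / y $ d) powr s))"
        using mult_left_mono[OF S, of "\<beta>^2"] b2 by (simp add: algebra_simps)
      also have "\<dots> \<le> l * 1 + m * 1"
        using norm1[OF xT] norm1[OF yT] l by (intro add_mono mult_left_mono) auto
      finally have A: "\<beta>^2 * (\<Sum>f\<in>UNIV. (z $ f / t) powr s) \<le> 1" using l by simp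
      have tp: "t powr s > 0" using tpos by simp
      have "\<beta>^2 * (\<Sum>f\<in>UNIV. (z $ f / t) powr s) = \<beta>^2 * (\<Sum>f\<in>UNIV. z $ f powr s) / t powr s"
        by (simp add: powr_divide sum_divide_distrib[symmetric])
      then have "\<beta>^2 * (\<Sum>f\<in>UNIV. z $ f powr s) \<le> t powr s" using A tp
        by (simp add: divide_le_eq)
      then show "z \<in> ?T" using zn unfolding t_def by simp
    qed
  qed
qed



lemma convex_Gset_gt1:
  fixes c :: "real^'n"
  assumes p: "p > 1" "p \<le> 3" and c: "\<forall>f. c $ f > 0" and \<alpha>: "\<alpha> > 0" and b: "\<beta> > 0"
  shows "convex (Gset c p \<alpha> d \<beta>)"
proof -
  define r where "r = 1 / (p - 1)"
  define T where "T = {x::real^'n. nonneg_vec x \<and> \<beta>^2 * (\<Sum>f\<in>UNIV. x $ f powr (2 * r)) \<le> x $ d powr (2 * r)}"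
  define L where "L = (\<lambda>w::real^'n. \<chi> f. w $ f / c $ f)"
  have s: "2 * r \<ge> 1" unfolding r_def using p by (simp add: field_simps)
  have lin: "linear L" unfolding L_def
    by (rule linearI) (simp_all add: vec_eq_iff add_divide_distrib)
  have nn: "nonneg_vec (L w) \<longleftrightarrow> nonneg_vec w" for w
    unfolding L_def nonneg_vec_def using c by (simp add: zero_le_divide_iff) (meson less_le_not_le)
  have "Gset c p \<alpha> d \<beta> = L -` T"
  proof (intro set_eqI)
    fix w
    show "w \<in> Gset c p \<alpha> d \<beta> \<longleftrightarrow> w \<in> L -` T"
    proof (cases "nonneg_vec w")
      case True
      then have "nonneg_vec (L w)" using nn by simp
      from cond_equiv[OF this b, of r d] show ?thesis
        unfolding Gset_p_gt1[OF p(1) c \<alpha>] T_def r_def using True \<open>nonneg_vec (L w)\<close> by (simp add: L_def)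
    next
      case False
      then show ?thesis unfolding Gset_def T_def using nn by auto
    qed
  qed
  moreover have "convex T" unfolding T_def by (rule convex_T[OF s b])
  ultimately show ?thesis using convex_linear_vimage[OF lin] by simp
qed



lemma Fc1: assumes "nonneg_vec e" shows "Fc c 1 e = c \<bullet> e"
  using assms unfolding Fc_def nonneg_vec_def inner_vec_def inner_real_def by simp

lemma optw1: "optw c 1 \<alpha> w e \<longleftrightarrow> nonneg_vec e \<and> w \<bullet> e \<ge> \<alpha> \<and>
     (\<forall>e'. nonneg_vec e' \<and> w \<bullet> e' \<ge> \<alpha> \<longrightarrow> c \<bullet> e \<le> c \<bullet> e')"
  unfolding optw_def using Fc1 by metis

lemma norm_single:
  fixes e :: "real^'n"
  assumes "\<forall>u. u \<noteq> d \<longrightarrow> e $ u = 0"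
  shows "norm e = sqrt ((e $ d)^2)"
proof -
  have "(\<Sum>f\<in>UNIV. (e $ f)^2) = (\<Sum>f\<in>UNIV. if f = d then (e $ d)^2 else 0)"
    using assms by (intro sum.cong) auto
  then show ?thesis unfolding norm_vec_def L2_set_def by simp
qed

lemma Gset_p1:
  fixes c :: "real^'n"
  assumes c: "\<forall>f. c $ f > 0" and \<alpha>: "\<alpha> > 0" and b: "\<beta> > 0" "\<beta> \<le> 1"
  shows "Gset c 1 \<alpha> d \<beta> = {w. nonneg_vec w \<and> (w = 0 \<or> (\<forall>u. u \<noteq> d \<longrightarrow> w $ u * c $ d < w $ d * c $ u))}"
proof (intro set_eqI iffI)
  fix w assume wG: "w \<in> Gset c 1 \<alpha> d \<beta>"
  then have wn: "nonneg_vec w" unfolding Gset_def by auto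
  have wnn: "w $ f \<ge> 0" for f using wn unfolding nonneg_vec_def by auto
  have cpos: "c $ f > 0" for f using c by auto
  show "w \<in> {w. nonneg_vec w \<and> (w = 0 \<or> (\<forall>u. u \<noteq> d \<longrightarrow> w $ u * c $ d < w $ d * c $ u))}"
  proof (rule ccontr)
    assume "\<not> ?thesis"
    then have w0: "w \<noteq> 0" and "\<exists>u. u \<noteq> d \<and> \<not> w $ u * c $ d < w $ d * c $ u" using wn by auto
    then obtain u where u: "u \<noteq> d" "w $ d * c $ u \<le> w $ u * c $ d" by auto
    define P where "P = {f. w $ f > 0}"
    obtain f0 where "w $ f0 \<noteq> 0" using w0 by (metis vec_eq_iff zero_index)
    then have f0: "f0 \<in> P" unfolding P_def using wnn[of f0] by simp
    define g where "g f = c $ f / w $ f" for f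
    define mu where "mu = Min (g ` P)"
    have finP: "finite P" by simp
    have "mu \<in> g ` P" unfolding mu_def using f0 finP by (intro Min_in) auto
    then obtain m0 where m0: "m0 \<in> P" "g m0 = mu" by auto
    have mule: "mu \<le> g f" if "f \<in> P" for f unfolding mu_def using that finP by simp
    have "\<exists>m. m \<noteq> d \<and> m \<in> P \<and> g m = mu"
    proof (cases "m0 = d")
      case False then show ?thesis using m0 by auto
    next
      case True
      then have wd: "w $ d > 0" using m0 unfolding P_def by simp
      then have "w $ u * c $ d > 0" using u(2) cpos[of u] by (smt (verit) mult_pos_pos)
      then have wu: "w $ u > 0" using cpos[of d] wnn[of u] by (simp add: zero_less_mult_iff)
      have "g u \<le> g d" unfolding g_def using wu wd u(2) cpos[of d] cpos[of u]
        by (simp add: divide_simps mult.commute)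
      moreover have "u \<in> P" using wu unfolding P_def by simp
      ultimately have "g u = mu" using mule m0 True by fastforce
      then show ?thesis using u(1) \<open>u \<in> P\<close> by auto
    qed
    then obtain m where m: "m \<noteq> d" "w $ m > 0" "g m = mu" unfolding P_def by auto
    have minc: "c $ m * w $ f \<le> c $ f * w $ m" for f
    proof (cases "f \<in> P")
      case True
      then have "g m \<le> g f" using m mule by simp
      then show ?thesis unfolding g_def using True m(2) unfolding P_def
        by (simp add: divide_simps mult.commute)
    next
      case False
      then have "w $ f = 0" unfolding P_def using wnn[of f] by simp
      then show ?thesis using cpos[of f] m(2) by simp
    qed
    define e where "e = (\<alpha> / w $ m) *\<^sub>R axis m (1::real)"
    have en: "nonneg_vec e" unfolding e_def nonneg_vec_def axis_def using \<alpha> m(2) by simp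
    have we: "w \<bullet> e = \<alpha>" unfolding e_def using m(2) by (simp add: inner_axis)
    have ce: "c \<bullet> e = c $ m / w $ m * \<alpha>" unfolding e_def by (simp add: inner_axis)
    have "optw c 1 \<alpha> w e" unfolding optw1
    proof (intro conjI allI impI)
      fix e' assume e': "nonneg_vec e' \<and> \<alpha> \<le> w \<bullet> e'"
      have "c $ m / w $ m * \<alpha> \<le> c $ m / w $ m * (w \<bullet> e')"
        using e' m(2) cpos[of m] by (intro mult_left_mono) auto
      also have "\<dots> = (\<Sum>f\<in>UNIV. c $ m / w $ m * w $ f * e' $ f)"
        unfolding inner_vec_def inner_real_def by (simp add: sum_distrib_left mult.assoc)
      also have "\<dots> \<le> (\<Sum>f\<in>UNIV. c $ f * e' $ f)"
      proof (intro sum_mono)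
        fix f
        have "c $ m / w $ m * w $ f \<le> c $ f" using minc[of f] m(2) by (simp add: divide_simps mult.commute)
        then show "c $ m / w $ m * w $ f * e' $ f \<le> c $ f * e' $ f"
          using e' unfolding nonneg_vec_def by (intro mult_right_mono) auto
      qed
      finally have "c $ m / w $ m * \<alpha> \<le> c \<bullet> e'" unfolding inner_vec_def inner_real_def .
      then show "c \<bullet> e \<le> c \<bullet> e'" using ce by simp
    qed (use en we in auto)
    then have "beta_desirable {d} \<beta> e" using wG unfolding Gset_def by auto
    moreover have "e $ d = 0" unfolding e_def axis_def using m(1) by simp
    moreover have "norm e > 0" unfolding e_def using \<alpha> m(2) by simp
    ultimately have "\<beta> * norm e \<le> 0" "\<beta> * norm e > 0" unfolding beta_desirable_def using b
      by auto
    then show False by simp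
  qed
next
  fix w assume "w \<in> {w. nonneg_vec w \<and> (w = 0 \<or> (\<forall>u. u \<noteq> d \<longrightarrow> w $ u * c $ d < w $ d * c $ u))}"
  then have wn: "nonneg_vec w" and cond: "w = 0 \<or> (\<forall>u. u \<noteq> d \<longrightarrow> w $ u * c $ d < w $ d * c $ u)" by auto
  have wnn: "w $ f \<ge> 0" for f using wn unfolding nonneg_vec_def by auto
  have cpos: "c $ f > 0" for f using c by auto
  show "w \<in> Gset c 1 \<alpha> d \<beta>"
  proof (cases "w = 0")
    case True then show ?thesis using Gset_zero[OF \<alpha>] by simp
  next
    case False
    then have cd: "\<And>u. u \<noteq> d \<Longrightarrow> w $ u * c $ d < w $ d * c $ u" using cond by auto
    show ?thesis unfolding Gset_def
    proof (intro CollectI conjI allI impI wn)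
      fix e assume oe: "optw c 1 \<alpha> w e"
      then have en: "nonneg_vec e" and we: "w \<bullet> e \<ge> \<alpha>"
        and best: "\<And>e'. nonneg_vec e' \<Longrightarrow> w \<bullet> e' \<ge> \<alpha> \<Longrightarrow> c \<bullet> e \<le> c \<bullet> e'"
        unfolding optw1 by auto
      have zero: "e $ u = 0" if ud: "u \<noteq> d" for u
      proof (rule ccontr)
        assume "e $ u \<noteq> 0"
        moreover have "e $ u \<ge> 0" using en unfolding nonneg_vec_def by simp
        ultimately have eu: "e $ u > 0" by simp
        have "w $ d * c $ u > 0" using cd[OF ud] wnn[of u] cpos[of d]
          by (smt (verit) mult_nonneg_nonneg)
        then have wd: "w $ d > 0" using cpos[of u] wnn[of d] by (simp add: zero_less_mult_iff)
        define del where "del = e $ u * w $ u / w $ d"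
        define e' where "e' = e + del *\<^sub>R axis d 1 - (e $ u) *\<^sub>R axis u (1::real)"
        have "del \<ge> 0" unfolding del_def using eu wnn[of u] wd by simp
        then have en': "nonneg_vec e'" using en ud unfolding e'_def nonneg_vec_def axis_def by auto
        have "w \<bullet> e' = w \<bullet> e + del * w $ d - e $ u * w $ u"
          unfolding e'_def by (simp add: inner_add_right inner_diff_right inner_axis)
        then have we': "w \<bullet> e' = w \<bullet> e" unfolding del_def using wd by simp
        have ce': "c \<bullet> e' = c \<bullet> e + del * c $ d - e $ u * c $ u"
          unfolding e'_def by (simp add: inner_add_right inner_diff_right inner_axis)
        have "del * c $ d < e $ u * c $ u"
        proof -
          have "e $ u * (w $ u * c $ d) < e $ u * (w $ d * c $ u)"
            using cd[OF ud] eu by simp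
          then show ?thesis unfolding del_def using wd by (simp add: divide_simps algebra_simps)
        qed
        then have "c \<bullet> e' < c \<bullet> e" using ce' by simp
        moreover have "c \<bullet> e \<le> c \<bullet> e'" using best[OF en'] we we' by simp
        ultimately show False by simp
      qed
      have "norm e = sqrt ((e $ d)^2)" using zero by (intro norm_single) auto
      then show "beta_desirable {d} \<beta> e" unfolding beta_desirable_def using b
        by (simp add: mult_left_le_one_le)
    qed
  qed
qed

lemma convex_S1:
  fixes c :: "real^'n"
  shows "convex {w. nonneg_vec w \<and> (w = 0 \<or> (\<forall>u. u \<noteq> d \<longrightarrow> w $ u * c $ d < w $ d * c $ u))}"
    (is "convex ?S")
proof (rule convexI)
  fix x y :: "real^'n" and a b :: real
  assume x: "x \<in> ?S" and y: "y \<in> ?S" and a: "0 \<le> a" and b: "0 \<le> b" and ab: "a + b = 1"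
  define z where "z = a *\<^sub>R x + b *\<^sub>R y"
  have zn: "nonneg_vec z" using x y a b unfolding z_def nonneg_vec_def by simp
  have "z \<in> ?S"
  proof (cases "z = 0")
    case True then show ?thesis using zn by simp
  next
    case False
    have "\<forall>u. u \<noteq> d \<longrightarrow> z $ u * c $ d < z $ d * c $ u"
    proof (intro allI impI)
      fix u assume ud: "u \<noteq> d"
      have zu: "z $ u * c $ d = a * (x $ u * c $ d) + b * (y $ u * c $ d)" unfolding z_def by (simp add: algebra_simps)
      have zd: "z $ d * c $ u = a * (x $ d * c $ u) + b * (y $ d * c $ u)" unfolding z_def by (simp add: algebra_simps)
      consider "x = 0" | "y = 0" | "x \<noteq> 0" "y \<noteq> 0" by blast
      then show "z $ u * c $ d < z $ d * c $ u"
      proof cases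
        case 1
        then have "b \<noteq> 0" "y \<noteq> 0" using False unfolding z_def by auto
        then have "y $ u * c $ d < y $ d * c $ u" using y ud by auto
        then show ?thesis unfolding zu zd using 1 b \<open>b \<noteq> 0\<close> by simp
      next
        case 2
        then have "a \<noteq> 0" "x \<noteq> 0" using False unfolding z_def by auto
        then have "x $ u * c $ d < x $ d * c $ u" using x ud by auto
        then show ?thesis unfolding zu zd using 2 a \<open>a \<noteq> 0\<close> by simp
      next
        case 3
        then have X: "x $ u * c $ d < x $ d * c $ u" and Y: "y $ u * c $ d < y $ d * c $ u"
          using x y ud by auto
        show ?thesis
        proof (cases "a = 0")
          case True then have "b = 1" using ab by simp
          then show ?thesis using True Y unfolding zu zd by simp
        next
          case False
          then have "a * (x $ u * c $ d) < a * (x $ d * c $ u)" using X a by simp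
          moreover have "b * (y $ u * c $ d) \<le> b * (y $ d * c $ u)" using Y b by (simp add: mult_left_mono)
          ultimately show ?thesis unfolding zu zd by simp
        qed
      qed
    qed
    then show ?thesis using zn by simp
  qed
  then show "a *\<^sub>R x + b *\<^sub>R y \<in> ?S" unfolding z_def .
qed


theorem proposition3:
  fixes A :: "real^'n^'n" and D U :: "'n set" and c :: "real^'n"
    and \<alpha> p \<beta> :: real
  assumes "is_dag A"
    and "D \<inter> U = {}" and "D \<union> U = UNIV" and "card D = 1"
    and "\<forall>f. c $ f > 0" and "\<alpha> > 0"
    and "1 \<le> p" and "p \<le> 3"
    and "0 < \<beta>" and "\<beta> \<le> 1"
  shows "convex (desirable_classifiers (contribution_matrix A) D c p \<alpha> \<beta>)"
proof -
  obtain d where D: "D = {d}" using assms(4) card_1_singletonE by blast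
  have p0: "p > 0" using assms(7) by simp
  have G: "convex (Gset c p \<alpha> d \<beta>)"
  proof (cases "p = 1")
    case True
    then show ?thesis using Gset_p1[OF assms(5) assms(6) assms(9) assms(10), of d] convex_S1[where c=c and d=d] by simp
  next
    case False
    then have "p > 1" using assms(7) by simp
    then show ?thesis using convex_Gset_gt1[OF _ assms(8) assms(5) assms(6) assms(9)] by simp
  qed
  show ?thesis unfolding D classifiers_eq[OF assms(5) p0]
    using convex_linear_vimage[OF matrix_vector_mul_linear[of "contribution_matrix A"] G] by simp
qed

end
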